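(* In the setup of the context, let $B=(b_i)_{i=1}^n$ and $B'=(b'_i)_{i=1}^n$ be two $\ast$-symmetric bases of $H$ with $b'_i=\sum_jA_{ij}b_j$, and let $J$, $J'$ be the asymptotic algebras built from $B$ and $B'$ (bases $(t_i)$, $(t'_i)$, traces $\bar\tau,\bar\tau'$). Then $A\in O_n(\mathcal O)$, and the $F$-linear map $\alpha:J\to J'$, $\alpha(t_x):=\sum_i\bar A_{ix}t'_i$ (with $\bar A$ the reduction of $A$ modulo $\mathfrak m$) satisfies: (a) $\alpha$ is an isomorphism of $F$-algebras; (b) $\bar\tau'\circ\alpha=\bar\tau$; (c) $\alpha(u^\ast)=\alpha(u)^\ast$ for all $u\in J$.
   Context: Setup: $\Gamma$ totally ordered abelian group; $K$ field with surjective valuation $\nu$, valuation ring $\mathcal O$, maximal ideal $\mathfrak m$, formally real residue field $F$. $H$ finite-dimensional split semisimple symmetric $K$-algebra with trace form $\tau$ and $K$-linear involutive antiautomorphism $\ast$; a $\ast$-symmetric basis is a basis $B$ with $B^\ast=B$ and $\tau(bc^\ast)=\delta_{bc}$. With $\Lambda$, $\chi_\lambda$, $c_\lambda$ ($\tau=\sum c_\lambda^{-1}\chi_\lambda$), $a_\lambda=-\tfrac12\nu(c_\lambda)\in\Gamma$, a fixed homomorphism $\gamma\mapsto v^\gamma$ from $\langle a_\lambda\rangle$ to $K^\times$ with $\nu(v^\gamma)=\gamma$, $f_\lambda=v^{2a_\lambda}c_\lambda$, and balanced representations $\rho_\lambda$ (irreducible of type $\lambda$ with $\nu(\rho_\lambda(b))\ge-a_\lambda$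 on every $\ast$-symmetric basis) with leading coefficients $c^\lambda(x)=v^{a_\lambda}\rho_\lambda(x)\bmod\mathfrak m$, the asymptotic algebra of a $\ast$-symmetric basis $B$ is the $F$-algebra $J$ with basis $(t_x)_{x\in B}$, product $t_xt_y=\sum_z\gamma_{x,y,z}t_{z^\ast}$ where $\gamma_{x,y,z}=\sum_\lambda\sum_{\mathfrak{s,t,u}}f_\lambda^{-1}c^\lambda(x)_{\mathfrak{st}}c^\lambda(y)_{\mathfrak{tu}}c^\lambda(z)_{\mathfrak{us}}$, trace form $\bar\tau(t_x)=n_x:=\sum_\lambda\sum_{\mathfrak s}f_\lambda^{-1}c^\lambda(x^\ast)_{\mathfrak{ss}}$, and involution $t_x^\ast=t_{x^\ast}$. *)

theory Defs
  imports Main "Jordan_Normal_Form.Matrix"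
begin

text \<open>A valuation is modelled as a function on the nonzero elements of the field;
  its value at 0 is irrelevant (conventionally infinity).
  valge nu x g means nu(x) >= g, with nu(0) = infinity.\<close>

definition valge :: "('k::field \<Rightarrow> 'g::linordered_ab_group_add) \<Rightarrow> 'k \<Rightarrow> 'g \<Rightarrow> bool" where
  "valge \<nu> x g \<longleftrightarrow> x = 0 \<or> g \<le> \<nu> x"

definition surj_valuation :: "('k::field \<Rightarrow> 'g::linordered_ab_group_add) \<Rightarrow> bool" where
  "surj_valuation \<nu> \<longleftrightarrow>
     (\<forall>x y. x \<noteq> 0 \<longrightarrow> y \<noteq> 0 \<longrightarrow> \<nu> (x * y) = \<nu> x + \<nu> y) \<and>
     (\<forall>x y. x \<noteq> 0 \<longrightarrow> y \<noteq> 0 \<longrightarrow> x + y \<noteq> 0 \<longrightarrow> min (\<nu> x) (\<nu> y) \<le> \<nu> (x + y)) \<and>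
     (\<forall>g. \<exists>x. x \<noteq> 0 \<and> \<nu> x = g)"

definition val_ring :: "('k::field \<Rightarrow> 'g::linordered_ab_group_add) \<Rightarrow> 'k set" where
  "val_ring \<nu> = {x. valge \<nu> x 0}"

definition val_ideal :: "('k::field \<Rightarrow> 'g::linordered_ab_group_add) \<Rightarrow> 'k set" where
  "val_ideal \<nu> = {x. x = 0 \<or> 0 < \<nu> x}"

text \<open>pi is the reduction map O -> F = O/m: a surjective ring homomorphism on O with
  kernel m (values outside O are irrelevant).\<close>

definition residue_map :: "('k::field \<Rightarrow> 'g::linordered_ab_group_add) \<Rightarrow> ('k \<Rightarrow> 'f::field) \<Rightarrow> bool" where
  "residue_map \<nu> \<pi> \<longleftrightarrow>
     (\<forall>x\<in>val_ring \<nu>. \<forall>y\<in>val_ring \<nu>. \<pi> (x + y) = \<pi> x + \<pi> y \<and> \<pi> (x * y) = \<pi> x * \<pi> y) \<and>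
     \<pi> 1 = 1 \<and> \<pi> ` val_ring \<nu> = UNIV \<and>
     (\<forall>x\<in>val_ring \<nu>. \<pi> x = 0 \<longleftrightarrow> x \<in> val_ideal \<nu>)"

definition formally_real :: "'f::field itself \<Rightarrow> bool" where
  "formally_real _ \<longleftrightarrow> (\<forall>xs :: 'f list. sum_list (map (\<lambda>x. x ^ 2) xs) \<noteq> -1)"

inductive_set gen_subgroup :: "'g::ab_group_add set \<Rightarrow> 'g set" for S where
  zero: "0 \<in> gen_subgroup S"
| gen: "x \<in> S \<Longrightarrow> x \<in> gen_subgroup S"
| add: "x \<in> gen_subgroup S \<Longrightarrow> y \<in> gen_subgroup S \<Longrightarrow> x + y \<in> gen_subgroup S"
| neg: "x \<in> gen_subgroup S \<Longrightarrow> - x \<in> gen_subgroup S"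

definition K_algebra :: "('k::field \<Rightarrow> 'h::ring_1 \<Rightarrow> 'h) \<Rightarrow> bool" where
  "K_algebra sc \<longleftrightarrow> vector_space sc \<and>
     (\<forall>a x y. sc a (x * y) = sc a x * y \<and> sc a (x * y) = x * sc a y)"

definition is_basis :: "('k::field \<Rightarrow> 'h::ring_1 \<Rightarrow> 'h) \<Rightarrow> (nat \<Rightarrow> 'h) \<Rightarrow> nat \<Rightarrow> bool" where
  "is_basis sc b n \<longleftrightarrow> inj_on b {..<n} \<and> \<not> module.dependent sc (b ` {..<n}) \<and>
     module.span sc (b ` {..<n}) = UNIV"

definition fin_dim :: "('k::field \<Rightarrow> 'h::ring_1 \<Rightarrow> 'h) \<Rightarrow> bool" where
  "fin_dim sc \<longleftrightarrow> (\<exists>b n. is_basis sc b n)"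

definition is_rep :: "('k::field \<Rightarrow> 'h::ring_1 \<Rightarrow> 'h) \<Rightarrow> nat \<Rightarrow> ('h \<Rightarrow> 'k mat) \<Rightarrow> bool" where
  "is_rep sc d \<rho> \<longleftrightarrow> (\<forall>x. \<rho> x \<in> carrier_mat d d) \<and> \<rho> 1 = 1\<^sub>m d \<and>
     (\<forall>x y. \<rho> (x * y) = \<rho> x * \<rho> y) \<and> (\<forall>x y. \<rho> (x + y) = \<rho> x + \<rho> y) \<and>
     (\<forall>a x. \<rho> (sc a x) = a \<cdot>\<^sub>m \<rho> x)"

definition irreducible_rep :: "('k::field \<Rightarrow> 'h::ring_1 \<Rightarrow> 'h) \<Rightarrow> nat \<Rightarrow> ('h \<Rightarrow> 'k mat) \<Rightarrow> bool" where
  "irreducible_rep sc d \<rho> \<longleftrightarrow> is_rep sc d \<rho> \<and> 0 < d \<and>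
     (\<forall>W. W \<subseteq> carrier_vec d \<longrightarrow> 0\<^sub>v d \<in> W \<longrightarrow>
        (\<forall>u\<in>W. \<forall>w\<in>W. u + w \<in> W) \<longrightarrow> (\<forall>a. \<forall>u\<in>W. a \<cdot>\<^sub>v u \<in> W) \<longrightarrow>
        (\<forall>x. \<forall>u\<in>W. \<rho> x *\<^sub>v u \<in> W) \<longrightarrow> W = {0\<^sub>v d} \<or> W = carrier_vec d)"

definition mtrace :: "'a::comm_ring_1 mat \<Rightarrow> 'a" where
  "mtrace A = (\<Sum>i<dim_row A. A $$ (i, i))"

text \<open>Split semisimple: finite-dimensional and isomorphic, via finitely many
  irreducible representations, to a product of full matrix algebras over K.\<close>

definition split_semisimple :: "('k::field \<Rightarrow> 'h::ring_1 \<Rightarrow> 'h) \<Rightarrow> bool" where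
  "split_semisimple sc \<longleftrightarrow> K_algebra sc \<and> fin_dim sc \<and>
     (\<exists>(r::nat) (ds :: nat \<Rightarrow> nat) (\<rho>s :: nat \<Rightarrow> 'h \<Rightarrow> 'k mat).
        (\<forall>i<r. irreducible_rep sc (ds i) (\<rho>s i)) \<and>
        (\<forall>M. (\<forall>i<r. M i \<in> carrier_mat (ds i) (ds i)) \<longrightarrow> (\<exists>!x. \<forall>i<r. \<rho>s i x = M i)))"

definition sym_trace_form :: "('k::field \<Rightarrow> 'h::ring_1 \<Rightarrow> 'h) \<Rightarrow> ('h \<Rightarrow> 'k) \<Rightarrow> bool" where
  "sym_trace_form sc \<tau> \<longleftrightarrow> (\<forall>x y. \<tau> (x + y) = \<tau> x + \<tau> y) \<and> (\<forall>a x. \<tau> (sc a x) = a * \<tau> x) \<and>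
     (\<forall>x y. \<tau> (x * y) = \<tau> (y * x)) \<and> (\<forall>x. (\<forall>y. \<tau> (x * y) = 0) \<longrightarrow> x = 0)"

definition lin_involutive_antiaut :: "('k::field \<Rightarrow> 'h::ring_1 \<Rightarrow> 'h) \<Rightarrow> ('h \<Rightarrow> 'h) \<Rightarrow> bool" where
  "lin_involutive_antiaut sc st \<longleftrightarrow> (\<forall>x y. st (x + y) = st x + st y) \<and>
     (\<forall>a x. st (sc a x) = sc a (st x)) \<and> (\<forall>x y. st (x * y) = st y * st x) \<and>
     (\<forall>x. st (st x) = x)"

definition star_sym_basis ::
  "('k::field \<Rightarrow> 'h::ring_1 \<Rightarrow> 'h) \<Rightarrow> ('h \<Rightarrow> 'k) \<Rightarrow> ('h \<Rightarrow> 'h) \<Rightarrow> (nat \<Rightarrow> 'h) \<Rightarrow> nat \<Rightarrow> bool" where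
  "star_sym_basis sc \<tau> st b n \<longleftrightarrow> is_basis sc b n \<and> st ` b ` {..<n} = b ` {..<n} \<and>
     (\<forall>i<n. \<forall>j<n. \<tau> (b i * st (b j)) = (if i = j then 1 else 0))"

definition star_idx :: "('h \<Rightarrow> 'h) \<Rightarrow> (nat \<Rightarrow> 'h) \<Rightarrow> nat \<Rightarrow> nat \<Rightarrow> nat" where
  "star_idx st b n i = (THE j. j < n \<and> b j = st (b i))"

definition lead_coeff_mat :: "('k \<Rightarrow> 'f) \<Rightarrow> 'k::field \<Rightarrow> 'k mat \<Rightarrow> 'f mat" where
  "lead_coeff_mat \<pi> va R = map_mat (\<lambda>e. \<pi> (va * e)) R"

text \<open>Parameters: pi reduction, Lam, d dimensions, rho reps, va lambda = v^{a_lambda},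
  f lambda = f_lambda (in K).\<close>

definition asym_gamma ::
  "('k::field \<Rightarrow> 'f::field) \<Rightarrow> 'l set \<Rightarrow> ('l \<Rightarrow> nat) \<Rightarrow> ('l \<Rightarrow> 'h \<Rightarrow> 'k mat) \<Rightarrow> ('l \<Rightarrow> 'k) \<Rightarrow> ('l \<Rightarrow> 'k)
    \<Rightarrow> 'h \<Rightarrow> 'h \<Rightarrow> 'h \<Rightarrow> 'f" where
  "asym_gamma \<pi> \<Lambda> d \<rho> va f x y z =
    (\<Sum>lam\<in>\<Lambda>. \<Sum>s<d lam. \<Sum>t<d lam. \<Sum>u<d lam.
       inverse (\<pi> (f lam)) * lead_coeff_mat \<pi> (va lam) (\<rho> lam x) $$ (s, t)
         * lead_coeff_mat \<pi> (va lam) (\<rho> lam y) $$ (t, u)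
         * lead_coeff_mat \<pi> (va lam) (\<rho> lam z) $$ (u, s))"

definition asym_n ::
  "('k::field \<Rightarrow> 'f::field) \<Rightarrow> 'l set \<Rightarrow> ('l \<Rightarrow> nat) \<Rightarrow> ('l \<Rightarrow> 'h \<Rightarrow> 'k mat) \<Rightarrow> ('l \<Rightarrow> 'k) \<Rightarrow> ('l \<Rightarrow> 'k)
    \<Rightarrow> 'h \<Rightarrow> 'f" where
  "asym_n \<pi> \<Lambda> d \<rho> va f x =
    (\<Sum>lam\<in>\<Lambda>. \<Sum>s<d lam. inverse (\<pi> (f lam)) * lead_coeff_mat \<pi> (va lam) (\<rho> lam x) $$ (s, s))"

text \<open>Elements of J are coordinate vectors (dimension n) w.r.t. the basis (t_i)_{i<n}.
  Product: t_i t_j = sum_k gamma(b_i,b_j,b_k) t_{k*}.\<close>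

definition asym_mult ::
  "('k::field \<Rightarrow> 'f::field) \<Rightarrow> 'l set \<Rightarrow> ('l \<Rightarrow> nat) \<Rightarrow> ('l \<Rightarrow> 'h \<Rightarrow> 'k mat) \<Rightarrow> ('l \<Rightarrow> 'k) \<Rightarrow> ('l \<Rightarrow> 'k)
    \<Rightarrow> ('h \<Rightarrow> 'h) \<Rightarrow> (nat \<Rightarrow> 'h) \<Rightarrow> nat \<Rightarrow> 'f vec \<Rightarrow> 'f vec \<Rightarrow> 'f vec" where
  "asym_mult \<pi> \<Lambda> d \<rho> va f st b n u w =
     vec n (\<lambda>k. \<Sum>i<n. \<Sum>j<n. \<Sum>l<n.
        if star_idx st b n l = k then u $ i * w $ j * asym_gamma \<pi> \<Lambda> d \<rho> va f (b i) (b j) (b l) else 0)"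

definition asym_trace ::
  "('k::field \<Rightarrow> 'f::field) \<Rightarrow> 'l set \<Rightarrow> ('l \<Rightarrow> nat) \<Rightarrow> ('l \<Rightarrow> 'h \<Rightarrow> 'k mat) \<Rightarrow> ('l \<Rightarrow> 'k) \<Rightarrow> ('l \<Rightarrow> 'k)
    \<Rightarrow> ('h \<Rightarrow> 'h) \<Rightarrow> (nat \<Rightarrow> 'h) \<Rightarrow> nat \<Rightarrow> 'f vec \<Rightarrow> 'f" where
  "asym_trace \<pi> \<Lambda> d \<rho> va f st b n u = (\<Sum>i<n. u $ i * asym_n \<pi> \<Lambda> d \<rho> va f (st (b i)))"

definition asym_star :: "('h \<Rightarrow> 'h) \<Rightarrow> (nat \<Rightarrow> 'h) \<Rightarrow> nat \<Rightarrow> 'f::field vec \<Rightarrow> 'f vec" where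
  "asym_star st b n u = vec n (\<lambda>k. \<Sum>i<n. if star_idx st b n i = k then u $ i else 0)"

end

theory Submission
  imports Defs "Jordan_Normal_Form.Determinant"
begin

lemma val_mult: "surj_valuation \<nu> \<Longrightarrow> x \<noteq> 0 \<Longrightarrow> y \<noteq> 0 \<Longrightarrow> \<nu> (x*y) = \<nu> x + \<nu> y"
  unfolding surj_valuation_def by blast

lemma val_one: "surj_valuation \<nu> \<Longrightarrow> \<nu> 1 = 0"
  using val_mult[of \<nu> 1 1] by simp

lemma vr_0[simp]: "0 \<in> val_ring \<nu>" unfolding val_ring_def valge_def by simp

lemma vr_add: assumes "surj_valuation \<nu>" "x \<in> val_ring \<nu>" "y \<in> val_ring \<nu>" shows "x + y \<in> val_ring \<nu>"
proof -
  have u: "\<forall>x y. x \<noteq> 0 \<longrightarrow> y \<noteq> 0 \<longrightarrow> x + y \<noteq> 0 \<longrightarrow> min (\<nu> x) (\<nu> y) \<le> \<nu> (x + y)"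
    using assms(1) unfolding surj_valuation_def by blast
  show ?thesis
  proof (cases "x = 0 \<or> y = 0 \<or> x + y = 0")
    case True then show ?thesis using assms(2,3) by auto
  next
    case False
    then have "min (\<nu> x) (\<nu> y) \<le> \<nu> (x + y)" using u by blast
    moreover have "0 \<le> \<nu> x" "0 \<le> \<nu> y" using False assms(2,3) unfolding val_ring_def valge_def by auto
    ultimately have "0 \<le> \<nu> (x + y)" by (meson min.boundedI order_trans)
    then show ?thesis unfolding val_ring_def valge_def by simp
  qed
qed

lemma vr_mult: assumes "surj_valuation \<nu>" "x \<in> val_ring \<nu>" "y \<in> val_ring \<nu>" shows "x * y \<in> val_ring \<nu>"
proof (cases "x = 0 \<or> y = 0")
  case False
  then show ?thesis using assms val_mult[OF assms(1), of x y] unfolding val_ring_def valge_def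
    by (auto intro: add_nonneg_nonneg)
qed auto

lemma vr_1: "surj_valuation \<nu> \<Longrightarrow> 1 \<in> val_ring \<nu>" unfolding val_ring_def valge_def using val_one[of \<nu>] by auto

lemma vr_sum: assumes "surj_valuation \<nu>" "\<And>x. x \<in> S \<Longrightarrow> g x \<in> val_ring \<nu>" shows "sum g S \<in> val_ring \<nu>"
  using assms(2)
proof (induction S rule: infinite_finite_induct)
  case (insert x F) then show ?case using vr_add[OF assms(1)] by simp
qed auto

lemma res_add: "residue_map \<nu> \<pi> \<Longrightarrow> x \<in> val_ring \<nu> \<Longrightarrow> y \<in> val_ring \<nu> \<Longrightarrow> \<pi> (x+y) = \<pi> x + \<pi> y"
  unfolding residue_map_def by blast
lemma res_mult: "residue_map \<nu> \<pi> \<Longrightarrow> x \<in> val_ring \<nu> \<Longrightarrow> y \<in> val_ring \<nu> \<Longrightarrow> \<pi> (x*y) = \<pi> x * \<pi> y"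
  unfolding residue_map_def by blast
lemma res_0: "residue_map \<nu> \<pi> \<Longrightarrow> \<pi> 0 = 0"
proof -
  assume r: "residue_map \<nu> \<pi>"
  have "\<pi> 0 = \<pi> 0 + \<pi> 0" using res_add[OF r vr_0 vr_0] by (metis add_0)
  then show ?thesis by (metis add_left_imp_eq add.right_neutral)
qed
lemma res_1: "residue_map \<nu> \<pi> \<Longrightarrow> \<pi> 1 = 1"
  unfolding residue_map_def by blast

lemma res_sum: assumes "surj_valuation \<nu>" "residue_map \<nu> \<pi>" "\<And>x. x \<in> S \<Longrightarrow> g x \<in> val_ring \<nu>"
  shows "\<pi> (sum g S) = (\<Sum>x\<in>S. \<pi> (g x))"
  using assms(3)
proof (induction S rule: infinite_finite_induct)
  case (insert x F)
  have "sum g F \<in> val_ring \<nu>" using vr_sum[OF assms(1), of F g] insert.prems by blast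
  then show ?case using res_add[OF assms(2)] insert by simp
qed (auto simp: res_0[OF assms(2)])



lemma tau_0: "sym_trace_form sc \<tau> \<Longrightarrow> \<tau> 0 = 0"
proof -
  assume t: "sym_trace_form sc \<tau>"
  have "\<tau> 0 = \<tau> 0 + \<tau> 0" using t unfolding sym_trace_form_def by (metis add_0)
  then show ?thesis by (metis add_left_imp_eq add.right_neutral)
qed

lemma tau_sum: "sym_trace_form sc \<tau> \<Longrightarrow> \<tau> (sum g S) = (\<Sum>x\<in>S. \<tau> (g x))"
  by (induction S rule: infinite_finite_induct) (auto simp: tau_0 sym_trace_form_def)

lemma tau_sc: "sym_trace_form sc \<tau> \<Longrightarrow> \<tau> (sc a x) = a * \<tau> x"
  unfolding sym_trace_form_def by blast

lemma tau_comm: "sym_trace_form sc \<tau> \<Longrightarrow> \<tau> (x * y) = \<tau> (y * x)"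
  unfolding sym_trace_form_def by blast

lemma st_0: "lin_involutive_antiaut sc st \<Longrightarrow> st 0 = 0"
proof -
  assume t: "lin_involutive_antiaut sc st"
  have "st 0 = st 0 + st 0" using t unfolding lin_involutive_antiaut_def by (metis add_0)
  then show ?thesis by (metis add_left_imp_eq add.right_neutral)
qed

lemma st_sum: "lin_involutive_antiaut sc st \<Longrightarrow> st (sum g S) = (\<Sum>x\<in>S. st (g x))"
  by (induction S rule: infinite_finite_induct) (auto simp: st_0 lin_involutive_antiaut_def)

lemma st_sc: "lin_involutive_antiaut sc st \<Longrightarrow> st (sc a x) = sc a (st x)"
  unfolding lin_involutive_antiaut_def by blast
lemma st_st: "lin_involutive_antiaut sc st \<Longrightarrow> st (st x) = x"
  unfolding lin_involutive_antiaut_def by blast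
lemma st_mult: "lin_involutive_antiaut sc st \<Longrightarrow> st (x * y) = st y * st x"
  unfolding lin_involutive_antiaut_def by blast

lemma sc_multL: "K_algebra sc \<Longrightarrow> sc a x * y = sc a (x * y)"
  unfolding K_algebra_def by metis
lemma sc_multR: "K_algebra sc \<Longrightarrow> x * sc a y = sc a (x * y)"
  unfolding K_algebra_def by metis

lemma sigma_props:
  assumes "star_sym_basis sc \<tau> st b n" "i < n"
  shows "star_idx st b n i < n \<and> b (star_idx st b n i) = st (b i)"
proof -
  have inj: "inj_on b {..<n}" and im: "st ` b ` {..<n} = b ` {..<n}"
    using assms(1) unfolding star_sym_basis_def is_basis_def by auto
  have "st (b i) \<in> b ` {..<n}" using im assms(2) by blast
  then obtain j where j: "j < n" "b j = st (b i)" by auto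
  have "\<exists>!j. j < n \<and> b j = st (b i)"
    using j inj unfolding inj_on_def by (metis lessThan_iff)
  then show ?thesis unfolding star_idx_def by (rule theI')
qed

lemma sigma_inv:
  assumes "star_sym_basis sc \<tau> st b n" "lin_involutive_antiaut sc st" "i < n"
  shows "star_idx st b n (star_idx st b n i) = i"
proof -
  have inj: "inj_on b {..<n}" using assms(1) unfolding star_sym_basis_def is_basis_def by auto
  note s1 = sigma_props[OF assms(1) assms(3)]
  note s2 = sigma_props[OF assms(1) conjunct1[OF s1]]
  have "b (star_idx st b n (star_idx st b n i)) = b i" using s1 s2 st_st[OF assms(2)] by simp
  then show ?thesis using inj s1 s2 assms(3) unfolding inj_on_def by blast
qed

context
  fixes sc :: "'k::field \<Rightarrow> 'h::ring_1 \<Rightarrow> 'h" and \<tau> st b b' n and A :: "'k mat"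
  assumes alg: "K_algebra sc" and tf: "sym_trace_form sc \<tau>" and star: "lin_involutive_antiaut sc st"
    and B: "star_sym_basis sc \<tau> st b n" and B': "star_sym_basis sc \<tau> st b' n"
    and bc: "\<forall>i<n. b' i = (\<Sum>j<n. sc (A $$ (i, j)) (b j))"
begin

lemma Bd: "i < n \<Longrightarrow> j < n \<Longrightarrow> \<tau> (b i * st (b j)) = (if i = j then 1 else 0)"
  using B unfolding star_sym_basis_def by blast
lemma B'd: "i < n \<Longrightarrow> j < n \<Longrightarrow> \<tau> (b' i * st (b' j)) = (if i = j then 1 else 0)"
  using B' unfolding star_sym_basis_def by blast

lemma tauA: assumes "i < n" "m < n" shows "\<tau> (b' i * st (b m)) = A $$ (i, m)"
proof -
  have "b' i * st (b m) = (\<Sum>j<n. sc (A $$ (i, j)) (b j * st (b m)))"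
    using bc assms by (simp add: sum_distrib_right sc_multL[OF alg])
  then have "\<tau> (b' i * st (b m)) = (\<Sum>j<n. A $$ (i, j) * (if j = m then 1 else 0))"
    using assms by (simp add: tau_sum[OF tf] tau_sc[OF tf] Bd)
  also have "\<dots> = A $$ (i, m)" using assms by (simp add: if_distrib cong: if_cong)
  finally show ?thesis .
qed

lemma st_b': "i < n \<Longrightarrow> st (b' i) = (\<Sum>j<n. sc (A $$ (i, j)) (st (b j)))"
  using bc by (simp add: st_sum[OF star] st_sc[OF star])

lemma tauA2: assumes "i < n" "m < n" shows "\<tau> (b m * st (b' i)) = A $$ (i, m)"
proof -
  have "b m * st (b' i) = (\<Sum>j<n. sc (A $$ (i, j)) (b m * st (b j)))"
    using st_b' assms by (simp add: sum_distrib_left sc_multR[OF alg])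
  then have "\<tau> (b m * st (b' i)) = (\<Sum>j<n. A $$ (i, j) * (if m = j then 1 else 0))"
    using assms by (simp add: tau_sum[OF tf] tau_sc[OF tf] Bd)
  also have "\<dots> = A $$ (i, m)" using assms by (simp add: if_distrib cong: if_cong)
  finally show ?thesis .
qed

lemma orth_entry: assumes "i < n" "j < n"
  shows "(\<Sum>k<n. A $$ (i, k) * A $$ (j, k)) = (if i = j then 1 else 0)"
proof -
  have "b' i * st (b' j) = (\<Sum>k<n. sc (A $$ (j, k)) (b' i * st (b k)))"
    using st_b' assms by (simp add: sum_distrib_left sc_multR[OF alg])
  then have "\<tau> (b' i * st (b' j)) = (\<Sum>k<n. A $$ (j, k) * A $$ (i, k))"
    using assms by (simp add: tau_sum[OF tf] tau_sc[OF tf] tauA)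
  then show ?thesis using B'd[OF assms] by (simp add: mult.commute)
qed

lemma A_sigma: assumes "l < n" "m < n"
  shows "A $$ (star_idx st b' n l, star_idx st b n m) = A $$ (l, m)"
proof -
  note s1 = sigma_props[OF B' assms(1)] and s2 = sigma_props[OF B assms(2)]
  have "A $$ (star_idx st b' n l, star_idx st b n m) = \<tau> (b' (star_idx st b' n l) * st (b (star_idx st b n m)))"
    using tauA[of "star_idx st b' n l" "star_idx st b n m"] s1 s2 by simp
  also have "\<dots> = \<tau> (st (b' l) * b m)" using s1 s2 st_st[OF star] by simp
  also have "\<dots> = \<tau> (b m * st (b' l))" using tau_comm[OF tf] by simp
  also have "\<dots> = A $$ (l, m)" using tauA2 assms by simp
  finally show ?thesis .
qed

end


lemma entries_in_O:
  fixes \<nu> :: "'k::field \<Rightarrow> 'g::linordered_ab_group_add" and \<pi> :: "'k \<Rightarrow> 'f::field" and A :: "'k mat"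
  assumes val: "surj_valuation \<nu>" and res: "residue_map \<nu> \<pi>" and freal: "formally_real TYPE('f)"
    and orth: "\<And>i. i < n \<Longrightarrow> (\<Sum>k<n. A $$ (i, k) * A $$ (i, k)) = 1"
    and ij: "i < n" "j < n"
  shows "A $$ (i, j) \<in> val_ring \<nu>"
proof (rule ccontr)
  assume nO: "A $$ (i, j) \<notin> val_ring \<nu>"
  then have Anz: "A $$ (i, j) \<noteq> 0" and Aneg: "\<nu> (A $$ (i, j)) < 0"
    unfolding val_ring_def valge_def by auto
  define S where "S = {k. k < n \<and> A $$ (i, k) \<noteq> 0}"
  have finS: "finite S" unfolding S_def by simp
  have jS: "j \<in> S" unfolding S_def using ij Anz by simp
  define \<mu> where "\<mu> = Min ((\<lambda>k. \<nu> (A $$ (i, k))) ` S)"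
  have mu_le: "\<And>k. k \<in> S \<Longrightarrow> \<mu> \<le> \<nu> (A $$ (i, k))" unfolding \<mu>_def using finS by simp
  have "\<mu> \<in> (\<lambda>k. \<nu> (A $$ (i, k))) ` S" unfolding \<mu>_def using finS jS by (intro Min_in) auto
  then obtain k0 where k0: "k0 \<in> S" "\<nu> (A $$ (i, k0)) = \<mu>" by auto
  have mu_neg: "\<mu> < 0" using mu_le[OF jS] Aneg by simp
  obtain x where x: "x \<noteq> 0" "\<nu> x = - \<mu>" using val unfolding surj_valuation_def by blast
  have xO: "\<And>k. k < n \<Longrightarrow> x * A $$ (i, k) \<in> val_ring \<nu>"
  proof -
    fix k assume k: "k < n"
    show "x * A $$ (i, k) \<in> val_ring \<nu>"
    proof (cases "A $$ (i, k) = 0")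
      case False
      then have "k \<in> S" using k unfolding S_def by simp
      then have "\<mu> \<le> \<nu> (A $$ (i, k))" by (rule mu_le)
      then have "0 \<le> \<nu> x + \<nu> (A $$ (i, k))" using x by (simp add: algebra_simps)
      then show ?thesis using val_mult[OF val x(1) False] unfolding val_ring_def valge_def by simp
    qed simp
  qed
  have k0n: "k0 < n" and k0nz: "A $$ (i, k0) \<noteq> 0" using k0 unfolding S_def by auto
  have "\<nu> (x * A $$ (i, k0)) = 0" using val_mult[OF val x(1) k0nz] x k0 by simp
  moreover have "x * A $$ (i, k0) \<noteq> 0" using x k0nz by simp
  ultimately have "x * A $$ (i, k0) \<notin> val_ideal \<nu>" unfolding val_ideal_def by simp
  then have c_nz: "\<pi> (x * A $$ (i, k0)) \<noteq> 0"
    using res xO[OF k0n] unfolding residue_map_def by blast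
  define c where "c = \<pi> (x * A $$ (i, k0))"
  have xxO: "x * x \<in> val_ring \<nu>" and xxI: "x * x \<in> val_ideal \<nu>"
  proof -
    have "\<nu> (x * x) = - \<mu> + - \<mu>" using val_mult[OF val x(1) x(1)] x by simp
    moreover have "0 < - \<mu> + - \<mu>" using mu_neg by (simp add: add_pos_pos)
    ultimately show "x * x \<in> val_ring \<nu>" "x * x \<in> val_ideal \<nu>"
      unfolding val_ring_def val_ideal_def valge_def by auto
  qed
  have pxx: "\<pi> (x * x) = 0" using res xxO xxI unfolding residue_map_def by blast
  have "(\<Sum>k<n. (x * A $$ (i, k)) * (x * A $$ (i, k))) = x * x * (\<Sum>k<n. A $$ (i, k) * A $$ (i, k))"
    by (simp add: sum_distrib_left algebra_simps)
  also have "\<dots> = x * x" using orth[OF ij(1)] by simp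
  finally have "\<pi> (\<Sum>k<n. (x * A $$ (i, k)) * (x * A $$ (i, k))) = 0" using pxx by simp
  then have sum0: "(\<Sum>k<n. \<pi> (x * A $$ (i, k)) * \<pi> (x * A $$ (i, k))) = 0"
    using res_sum[OF val res, of "{..<n}" "\<lambda>k. (x * A $$ (i, k)) * (x * A $$ (i, k))"]
      vr_mult[OF val xO xO] res_mult[OF res xO xO] by simp
  define q where "q k = \<pi> (x * A $$ (i, k)) / c" for k
  have "(\<Sum>k<n. q k ^ 2) = (\<Sum>k<n. \<pi> (x * A $$ (i, k)) * \<pi> (x * A $$ (i, k))) / (c * c)"
    unfolding q_def by (simp add: sum_divide_distrib power2_eq_square)
  then have sq0: "(\<Sum>k<n. q k ^ 2) = 0" using sum0 by simp
  have q1: "q k0 ^ 2 = 1" unfolding q_def c_def using c_nz by (simp add: power2_eq_square)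
  define xs where "xs = map (\<lambda>k. if k = k0 then 0 else q k) [0..<n]"
  have "sum_list (map (\<lambda>y. y ^ 2) xs) = (\<Sum>k<n. (if k = k0 then 0 else q k) ^ 2)"
    unfolding xs_def by (simp add: sum_set_upt_conv_sum_list_nat[symmetric] atLeast0LessThan o_def)
  also have "\<dots> = (\<Sum>k<n. q k ^ 2) - q k0 ^ 2"
  proof -
    have "(\<Sum>k<n. q k ^ 2) = q k0 ^ 2 + (\<Sum>k\<in>{..<n} - {k0}. q k ^ 2)"
      using k0n by (simp add: sum.remove)
    moreover have "(\<Sum>k<n. (if k = k0 then 0 else q k) ^ 2) = 0 ^ 2 + (\<Sum>k\<in>{..<n} - {k0}. q k ^ 2)"
      using k0n by (simp add: sum.remove)
    ultimately show ?thesis by simp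
  qed
  also have "\<dots> = -1" using sq0 q1 by simp
  finally show False using freal unfolding formally_real_def by blast
qed



definition G3 :: "'l set \<Rightarrow> ('l \<Rightarrow> nat) \<Rightarrow> ('l \<Rightarrow> 'f::comm_ring_1) \<Rightarrow> ('l\<Rightarrow>nat\<Rightarrow>nat\<Rightarrow>'f)
   \<Rightarrow> ('l\<Rightarrow>nat\<Rightarrow>nat\<Rightarrow>'f) \<Rightarrow> ('l\<Rightarrow>nat\<Rightarrow>nat\<Rightarrow>'f) \<Rightarrow> 'f" where
  "G3 L D C X Y Z = (\<Sum>lam\<in>L. \<Sum>s<D lam. \<Sum>t<D lam. \<Sum>u<D lam. C lam * X lam s t * Y lam t u * Z lam u s)"

lemma G3_lin1: "G3 L D C (\<lambda>lam s t. \<Sum>p\<in>I. P p * X p lam s t) Y Z = (\<Sum>p\<in>I. P p * G3 L D C (X p) Y Z)"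
  unfolding G3_def
  by (simp add: sum_distrib_left sum_distrib_right mult_ac sum.swap[of _ I])

lemma G3_lin2: "G3 L D C X (\<lambda>lam s t. \<Sum>p\<in>I. P p * Y p lam s t) Z = (\<Sum>p\<in>I. P p * G3 L D C X (Y p) Z)"
  unfolding G3_def
  by (simp add: sum_distrib_left sum_distrib_right mult_ac sum.swap[of _ I])

lemma G3_lin3: "G3 L D C X Y (\<lambda>lam s t. \<Sum>p\<in>I. P p * Z p lam s t) = (\<Sum>p\<in>I. P p * G3 L D C X Y (Z p))"
  unfolding G3_def
  by (simp add: sum_distrib_left sum_distrib_right mult_ac sum.swap[of _ I])

lemma G3_cong:
  assumes "\<And>lam s t. lam \<in> L \<Longrightarrow> s < D lam \<Longrightarrow> t < D lam \<Longrightarrow> X lam s t = X' lam s t"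
    "\<And>lam s t. lam \<in> L \<Longrightarrow> s < D lam \<Longrightarrow> t < D lam \<Longrightarrow> Y lam s t = Y' lam s t"
    "\<And>lam s t. lam \<in> L \<Longrightarrow> s < D lam \<Longrightarrow> t < D lam \<Longrightarrow> Z lam s t = Z' lam s t"
  shows "G3 L D C X Y Z = G3 L D C X' Y' Z'"
  unfolding G3_def using assms by (intro sum.cong refl) auto

definition N1 :: "'l set \<Rightarrow> ('l \<Rightarrow> nat) \<Rightarrow> ('l \<Rightarrow> 'f::comm_ring_1) \<Rightarrow> ('l\<Rightarrow>nat\<Rightarrow>nat\<Rightarrow>'f) \<Rightarrow> 'f" where
  "N1 L D C X = (\<Sum>lam\<in>L. \<Sum>s<D lam. C lam * X lam s s)"

lemma N1_lin: "N1 L D C (\<lambda>lam s t. \<Sum>p\<in>I. P p * X p lam s t) = (\<Sum>p\<in>I. P p * N1 L D C (X p))"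
  unfolding N1_def
  by (simp add: sum_distrib_left sum_distrib_right mult_ac sum.swap[of _ I])

lemma N1_cong:
  assumes "\<And>lam s t. lam \<in> L \<Longrightarrow> s < D lam \<Longrightarrow> t < D lam \<Longrightarrow> X lam s t = X' lam s t"
  shows "N1 L D C X = N1 L D C X'"
  unfolding N1_def using assms by (intro sum.cong refl) auto



lemma swap3: "(\<Sum>i\<in>I. \<Sum>p\<in>P. \<Sum>q\<in>Q. f i p q) = (\<Sum>p\<in>P. \<Sum>q\<in>Q. \<Sum>i\<in>I. f i p q)"
proof -
  have "(\<Sum>i\<in>I. \<Sum>p\<in>P. \<Sum>q\<in>Q. f i p q) = (\<Sum>p\<in>P. \<Sum>i\<in>I. \<Sum>q\<in>Q. f i p q)" by (rule sum.swap)
  also have "\<dots> = (\<Sum>p\<in>P. \<Sum>q\<in>Q. \<Sum>i\<in>I. f i p q)" by (intro sum.cong refl sum.swap)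
  finally show ?thesis .
qed

lemma sw_mult:
  fixes U W :: "nat \<Rightarrow> 'f::comm_ring_1"
  shows "(\<Sum>i\<in>I. \<Sum>j\<in>J. U i * W j * (\<Sum>p\<in>P. M i p * (\<Sum>q\<in>Q. N j q * T p q)))
   = (\<Sum>p\<in>P. \<Sum>q\<in>Q. (\<Sum>i\<in>I. U i * M i p) * (\<Sum>j\<in>J. W j * N j q) * T p q)"
proof -
  have "(\<Sum>i\<in>I. \<Sum>j\<in>J. U i * W j * (\<Sum>p\<in>P. M i p * (\<Sum>q\<in>Q. N j q * T p q)))
     = (\<Sum>i\<in>I. \<Sum>j\<in>J. \<Sum>p\<in>P. \<Sum>q\<in>Q. U i * M i p * (W j * N j q) * T p q)"
    by (simp only: sum_distrib_left) (intro sum.cong refl, simp add: mult_ac)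
  also have "\<dots> = (\<Sum>i\<in>I. \<Sum>p\<in>P. \<Sum>q\<in>Q. \<Sum>j\<in>J. U i * M i p * (W j * N j q) * T p q)"
    by (intro sum.cong refl swap3)
  also have "\<dots> = (\<Sum>p\<in>P. \<Sum>q\<in>Q. \<Sum>i\<in>I. \<Sum>j\<in>J. U i * M i p * (W j * N j q) * T p q)"
    by (rule swap3)
  also have "\<dots> = (\<Sum>p\<in>P. \<Sum>q\<in>Q. (\<Sum>i\<in>I. U i * M i p) * (\<Sum>j\<in>J. W j * N j q) * T p q)"
    by (simp only: sum_product, simp only: sum_distrib_right)
  finally show ?thesis .
qed

lemma sw_col:
  fixes u :: "nat \<Rightarrow> 'f::comm_ring_1"
  shows "(\<Sum>i\<in>I. (\<Sum>x\<in>X. M i x * u x) * M i p) = (\<Sum>x\<in>X. u x * (\<Sum>i\<in>I. M i x * M i p))"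
proof -
  have "(\<Sum>i\<in>I. (\<Sum>x\<in>X. M i x * u x) * M i p) = (\<Sum>i\<in>I. \<Sum>x\<in>X. u x * (M i x * M i p))"
    by (simp only: sum_distrib_right) (intro sum.cong refl, simp add: mult_ac)
  also have "\<dots> = (\<Sum>x\<in>X. \<Sum>i\<in>I. u x * (M i x * M i p))" by (rule sum.swap)
  also have "\<dots> = (\<Sum>x\<in>X. u x * (\<Sum>i\<in>I. M i x * M i p))" by (simp only: sum_distrib_left)
  finally show ?thesis .
qed

lemma sw_tr:
  fixes u :: "nat \<Rightarrow> 'f::comm_ring_1"
  shows "(\<Sum>i\<in>I. (\<Sum>x\<in>X. M i x * u x) * (\<Sum>m\<in>Y. M i m * g m)) = (\<Sum>x\<in>X. \<Sum>m\<in>Y. u x * g m * (\<Sum>i\<in>I. M i x * M i m))"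
proof -
  have "(\<Sum>i\<in>I. (\<Sum>x\<in>X. M i x * u x) * (\<Sum>m\<in>Y. M i m * g m)) = (\<Sum>i\<in>I. \<Sum>x\<in>X. \<Sum>m\<in>Y. u x * g m * (M i x * M i m))"
    by (simp only: sum_product) (intro sum.cong refl, simp add: mult_ac)
  also have "\<dots> = (\<Sum>x\<in>X. \<Sum>m\<in>Y. \<Sum>i\<in>I. u x * g m * (M i x * M i m))" by (rule swap3)
  also have "\<dots> = (\<Sum>x\<in>X. \<Sum>m\<in>Y. u x * g m * (\<Sum>i\<in>I. M i x * M i m))" by (simp only: sum_distrib_left)
  finally show ?thesis .
qed

lemma sw_c:
  fixes u :: "nat \<Rightarrow> 'f::comm_ring_1"
  shows "(\<Sum>c\<in>C. a c * (\<Sum>i\<in>I. \<Sum>j\<in>J. u i * w j * g i j c)) = (\<Sum>i\<in>I. \<Sum>j\<in>J. u i * w j * (\<Sum>c\<in>C. a c * g i j c))"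
proof -
  have "(\<Sum>c\<in>C. a c * (\<Sum>i\<in>I. \<Sum>j\<in>J. u i * w j * g i j c)) = (\<Sum>c\<in>C. \<Sum>i\<in>I. \<Sum>j\<in>J. u i * w j * (a c * g i j c))"
    by (simp only: sum_distrib_left) (intro sum.cong refl, simp add: mult_ac)
  also have "\<dots> = (\<Sum>i\<in>I. \<Sum>j\<in>J. \<Sum>c\<in>C. u i * w j * (a c * g i j c))" by (rule swap3)
  also have "\<dots> = (\<Sum>i\<in>I. \<Sum>j\<in>J. u i * w j * (\<Sum>c\<in>C. a c * g i j c))" by (simp only: sum_distrib_left)
  finally show ?thesis .
qed

lemma sum_sigma:
  fixes \<sigma> :: "nat \<Rightarrow> nat" and F :: "nat \<Rightarrow> 'a::comm_monoid_add"
  assumes "\<And>l. l < n \<Longrightarrow> \<sigma> l < n" "\<And>l. l < n \<Longrightarrow> \<sigma> (\<sigma> l) = l" "k < n"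
  shows "(\<Sum>l<n. if \<sigma> l = k then F l else 0) = F (\<sigma> k)"
proof -
  have "(\<Sum>l<n. if \<sigma> l = k then F l else 0) = (\<Sum>l<n. if l = \<sigma> k then F l else 0)"
  proof (intro sum.cong refl)
    fix l assume "l \<in> {..<n}"
    then have l: "l < n" by simp
    have "\<sigma> l = k \<longleftrightarrow> l = \<sigma> k"
    proof
      assume "\<sigma> l = k" then show "l = \<sigma> k" using assms(2)[OF l] by simp
    next
      assume "l = \<sigma> k" then show "\<sigma> l = k" using assms(2)[OF assms(3)] by simp
    qed
    then show "(if \<sigma> l = k then F l else 0) = (if l = \<sigma> k then F l else 0)" by simp
  qed
  also have "\<dots> = F (\<sigma> k)" using assms(1)[OF assms(3)] by (simp add: sum.delta)
  finally show ?thesis .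
qed

lemma sum_reidx:
  fixes \<sigma> :: "nat \<Rightarrow> nat"
  assumes "\<And>l. l < n \<Longrightarrow> \<sigma> l < n" "\<And>l. l < n \<Longrightarrow> \<sigma> (\<sigma> l) = l"
  shows "(\<Sum>p<n. g (\<sigma> p)) = (\<Sum>c<n. g c)"
proof -
  have "bij_betw \<sigma> {..<n} {..<n}"
    by (rule bij_betwI[where g = \<sigma>]) (use assms in auto)
  then show ?thesis by (rule sum.reindex_bij_betw)
qed



lemma rep_entry_add: "is_rep sc D R \<Longrightarrow> s < D \<Longrightarrow> t < D \<Longrightarrow> R (x + y) $$ (s,t) = R x $$ (s,t) + R y $$ (s,t)"
  unfolding is_rep_def by (metis carrier_matD index_add_mat(1))

lemma rep_entry_sc: "is_rep sc D R \<Longrightarrow> s < D \<Longrightarrow> t < D \<Longrightarrow> R (sc a x) $$ (s,t) = a * R x $$ (s,t)"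
  unfolding is_rep_def by (metis carrier_matD index_smult_mat(1))

lemma rep_entry_0: assumes "is_rep sc D R" "s < D" "t < D" shows "R 0 $$ (s,t) = 0"
proof -
  have "R 0 $$ (s,t) = R 0 $$ (s,t) + R 0 $$ (s,t)" using rep_entry_add[OF assms, of 0 0] by simp
  then show ?thesis by (metis add_left_imp_eq add.right_neutral)
qed

lemma rep_entry_sum: assumes "is_rep sc D R" "s < D" "t < D"
  shows "R (\<Sum>j\<in>S. sc (c j) (y j)) $$ (s,t) = (\<Sum>j\<in>S. c j * R (y j) $$ (s,t))"
  by (induction S rule: infinite_finite_induct)
     (simp_all add: rep_entry_0[OF assms] rep_entry_add[OF assms] rep_entry_sc[OF assms])

lemma mv: "M \<in> carrier_mat n n \<Longrightarrow> v \<in> carrier_vec n \<Longrightarrow> k < n \<Longrightarrow> (M *\<^sub>v v) $ k = (\<Sum>i<n. M $$ (k, i) * v $ i)"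
  by (simp add: scalar_prod_def atLeast0LessThan)




theorem lemma2p2p6:
  fixes \<nu> :: "'k::field \<Rightarrow> 'g::linordered_ab_group_add"
    and \<pi> :: "'k \<Rightarrow> 'f::field"
    and sc :: "'k \<Rightarrow> 'h::ring_1 \<Rightarrow> 'h"
    and \<tau> :: "'h \<Rightarrow> 'k"
    and st :: "'h \<Rightarrow> 'h"
    and \<Lambda> :: "'l set"
    and d :: "'l \<Rightarrow> nat"
    and \<rho> :: "'l \<Rightarrow> 'h \<Rightarrow> 'k mat"
    and c :: "'l \<Rightarrow> 'k"
    and a :: "'l \<Rightarrow> 'g"
    and v :: "'g \<Rightarrow> 'k"
    and b b' :: "nat \<Rightarrow> 'h"
    and n :: nat
    and A :: "'k mat"
  assumes val: "surj_valuation \<nu>"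
    and res: "residue_map \<nu> \<pi>"
    and freal: "formally_real TYPE('f)"
    and ssimple: "split_semisimple sc"
    and trace_form: "sym_trace_form sc \<tau>"
    and star: "lin_involutive_antiaut sc st"
    and finLam: "finite \<Lambda>"
    and irr: "\<forall>lam\<in>\<Lambda>. irreducible_rep sc (d lam) (\<rho> lam)"
    and distinct_chars: "\<forall>lam\<in>\<Lambda>. \<forall>mu\<in>\<Lambda>. lam \<noteq> mu \<longrightarrow>
               (\<lambda>x. mtrace (\<rho> lam x)) \<noteq> (\<lambda>x. mtrace (\<rho> mu x))"
    and all_chars: "\<forall>d' \<rho>'. irreducible_rep sc d' \<rho>' \<longrightarrow>
               (\<exists>lam\<in>\<Lambda>. \<forall>x. mtrace (\<rho>' x) = mtrace (\<rho> lam x))"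
    and c_nz: "\<forall>lam\<in>\<Lambda>. c lam \<noteq> 0"
    and schur: "\<forall>x. \<tau> x = (\<Sum>lam\<in>\<Lambda>. inverse (c lam) * mtrace (\<rho> lam x))"
    and a_def: "\<forall>lam\<in>\<Lambda>. a lam + a lam = - \<nu> (c lam)"
    and v_val: "\<forall>g\<in>gen_subgroup (a ` \<Lambda>). v g \<noteq> 0 \<and> \<nu> (v g) = g"
    and v_hom: "\<forall>g\<in>gen_subgroup (a ` \<Lambda>). \<forall>h\<in>gen_subgroup (a ` \<Lambda>). v (g + h) = v g * v h"
    and balanced: "\<forall>lam\<in>\<Lambda>. \<forall>(b0 :: nat \<Rightarrow> 'h) m. star_sym_basis sc \<tau> st b0 m \<longrightarrow>
               (\<forall>i<m. \<forall>s<d lam. \<forall>t<d lam. valge \<nu> (\<rho> lam (b0 i) $$ (s, t)) (- a lam))"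
    and B: "star_sym_basis sc \<tau> st b n"
    and B': "star_sym_basis sc \<tau> st b' n"
    and A: "A \<in> carrier_mat n n"
    and base_change: "\<forall>i<n. b' i = (\<Sum>j<n. sc (A $$ (i, j)) (b j))"
  defines "va \<equiv> \<lambda>lam. v (a lam)"
    and "f \<equiv> \<lambda>lam. v (a lam + a lam) * c lam"
    and "\<alpha> \<equiv> \<lambda>u. map_mat \<pi> A *\<^sub>v u"
  shows "(\<forall>i<n. \<forall>j<n. A $$ (i, j) \<in> val_ring \<nu>) \<and> A * A\<^sup>T = 1\<^sub>m n
    \<and> bij_betw \<alpha> (carrier_vec n) (carrier_vec n)
    \<and> (\<forall>u\<in>carrier_vec n. \<forall>w\<in>carrier_vec n.
          \<alpha> (asym_mult \<pi> \<Lambda> d \<rho> va f st b n u w) = asym_mult \<pi> \<Lambda> d \<rho> va f st b' n (\<alpha> u) (\<alpha> w))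
    \<and> (\<forall>u\<in>carrier_vec n. asym_trace \<pi> \<Lambda> d \<rho> va f st b' n (\<alpha> u) = asym_trace \<pi> \<Lambda> d \<rho> va f st b n u)
    \<and> (\<forall>u\<in>carrier_vec n. \<alpha> (asym_star st b n u) = asym_star st b' n (\<alpha> u))"
proof -
  have alg: "K_algebra sc" using ssimple unfolding split_semisimple_def by blast
  note orthE = orth_entry[OF alg trace_form star B B' base_change]
  have AO: "\<forall>i<n. \<forall>j<n. A $$ (i, j) \<in> val_ring \<nu>"
  proof (intro allI impI)
    fix i j assume ij: "i < n" "j < n"
    show "A $$ (i, j) \<in> val_ring \<nu>"
      by (rule entries_in_O[OF val res freal _ ij]) (simp add: orthE)
  qed
  have AAT: "A * A\<^sup>T = 1\<^sub>m n"
  proof (rule eq_matI)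
    fix i j assume "i < dim_row (1\<^sub>m n)" "j < dim_col (1\<^sub>m n)"
    then have ij: "i < n" "j < n" by auto
    have "(A * A\<^sup>T) $$ (i, j) = (\<Sum>k<n. A $$ (i, k) * A $$ (j, k))"
      using A ij by (simp add: scalar_prod_def atLeast0LessThan)
    then show "(A * A\<^sup>T) $$ (i, j) = 1\<^sub>m n $$ (i, j)" using orthE[OF ij] ij by simp
  qed (use A in auto)
  define Ab where "Ab = map_mat \<pi> A"
  have Ab: "Ab \<in> carrier_mat n n" using A unfolding Ab_def by simp
  have Abe: "\<And>i j. i < n \<Longrightarrow> j < n \<Longrightarrow> Ab $$ (i, j) = \<pi> (A $$ (i, j))"
    using A unfolding Ab_def by simp
  have AbAbT: "Ab * Ab\<^sup>T = 1\<^sub>m n"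
  proof (rule eq_matI)
    fix i j assume "i < dim_row (1\<^sub>m n)" "j < dim_col (1\<^sub>m n)"
    then have ij: "i < n" "j < n" by auto
    have "(Ab * Ab\<^sup>T) $$ (i, j) = (\<Sum>k<n. \<pi> (A $$ (i, k)) * \<pi> (A $$ (j, k)))"
      using Ab ij Abe by (simp add: scalar_prod_def atLeast0LessThan)
    also have "\<dots> = (\<Sum>k<n. \<pi> (A $$ (i, k) * A $$ (j, k)))"
      using res_mult[OF res] AO ij by simp
    also have "\<dots> = \<pi> (\<Sum>k<n. A $$ (i, k) * A $$ (j, k))"
      using res_sum[OF val res, of "{..<n}" "\<lambda>k. A $$ (i, k) * A $$ (j, k)"] vr_mult[OF val] AO ij by simp
    also have "\<dots> = (if i = j then 1 else 0)" using orthE[OF ij] res_0[OF res] res_1[OF res] by simp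
    finally show "(Ab * Ab\<^sup>T) $$ (i, j) = 1\<^sub>m n $$ (i, j)" using ij by simp
  qed (use Ab in auto)
  have AbTAb: "Ab\<^sup>T * Ab = 1\<^sub>m n"
    using mat_mult_left_right_inverse[OF Ab _ AbAbT] Ab by simp
  have colO: "\<And>p q. p < n \<Longrightarrow> q < n \<Longrightarrow> (\<Sum>i<n. Ab $$ (i, p) * Ab $$ (i, q)) = (if p = q then 1 else 0)"
  proof -
    fix p q assume pq: "p < n" "q < n"
    have "(Ab\<^sup>T * Ab) $$ (p, q) = (\<Sum>i<n. Ab $$ (i, p) * Ab $$ (i, q))"
      using Ab pq by (simp add: scalar_prod_def atLeast0LessThan)
    then show "(\<Sum>i<n. Ab $$ (i, p) * Ab $$ (i, q)) = (if p = q then 1 else 0)"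
      using AbTAb pq by simp
  qed
  define \<sigma> where "\<sigma> = star_idx st b n"
  define \<sigma>' where "\<sigma>' = star_idx st b' n"
  have sl: "\<And>l. l < n \<Longrightarrow> \<sigma> l < n" and sb: "\<And>l. l < n \<Longrightarrow> b (\<sigma> l) = st (b l)"
    using sigma_props[OF B] unfolding \<sigma>_def by auto
  have sl': "\<And>l. l < n \<Longrightarrow> \<sigma>' l < n"
    using sigma_props[OF B'] unfolding \<sigma>'_def by auto
  have ss: "\<And>l. l < n \<Longrightarrow> \<sigma> (\<sigma> l) = l" using sigma_inv[OF B star] unfolding \<sigma>_def by auto
  have ss': "\<And>l. l < n \<Longrightarrow> \<sigma>' (\<sigma>' l) = l" using sigma_inv[OF B' star] unfolding \<sigma>'_def by auto
  have Absig: "\<And>k c. k < n \<Longrightarrow> c < n \<Longrightarrow> Ab $$ (k, \<sigma> c) = Ab $$ (\<sigma>' k, c)"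
  proof -
    fix k c assume kc: "k < n" "c < n"
    have "A $$ (\<sigma>' (\<sigma>' k), \<sigma> c) = A $$ (\<sigma>' k, c)"
      using A_sigma[OF alg trace_form star B B' base_change sl'[OF kc(1)] kc(2)]
      unfolding \<sigma>_def \<sigma>'_def by simp
    then show "Ab $$ (k, \<sigma> c) = Ab $$ (\<sigma>' k, c)"
      using ss' kc Abe sl sl' by simp
  qed
  have rep: "\<And>lam. lam \<in> \<Lambda> \<Longrightarrow> is_rep sc (d lam) (\<rho> lam)"
    using irr unfolding irreducible_rep_def by blast
  have car: "\<And>lam x. lam \<in> \<Lambda> \<Longrightarrow> \<rho> lam x \<in> carrier_mat (d lam) (d lam)"
    using rep unfolding is_rep_def by blast
  have dr: "\<And>lam x. lam \<in> \<Lambda> \<Longrightarrow> dim_row (\<rho> lam x) = d lam"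
    and dc: "\<And>lam x. lam \<in> \<Lambda> \<Longrightarrow> dim_col (\<rho> lam x) = d lam" using car by auto
  define LC where "LC x = (\<lambda>lam s t. \<pi> (va lam * \<rho> lam x $$ (s, t)))" for x
  define C where "C = (\<lambda>lam. inverse (\<pi> (f lam)))"
  have gamma_G: "\<And>x y z. asym_gamma \<pi> \<Lambda> d \<rho> va f x y z = G3 \<Lambda> d C (LC x) (LC y) (LC z)"
    unfolding asym_gamma_def G3_def
    by (intro sum.cong refl) (auto simp: lead_coeff_mat_def LC_def C_def dr dc)
  have n_N: "\<And>x. asym_n \<pi> \<Lambda> d \<rho> va f x = N1 \<Lambda> d C (LC x)"
    unfolding asym_n_def N1_def
    by (intro sum.cong refl) (auto simp: lead_coeff_mat_def LC_def C_def dr dc)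
  have lcO: "\<And>lam s t j. lam \<in> \<Lambda> \<Longrightarrow> s < d lam \<Longrightarrow> t < d lam \<Longrightarrow> j < n \<Longrightarrow>
      va lam * \<rho> lam (b j) $$ (s, t) \<in> val_ring \<nu>"
  proof -
    fix lam s t j assume h: "lam \<in> \<Lambda>" "s < d lam" "t < d lam" "j < n"
    have vg: "valge \<nu> (\<rho> lam (b j) $$ (s, t)) (- a lam)"
      using balanced h B by blast
    have "a lam \<in> gen_subgroup (a ` \<Lambda>)" using h(1) by (intro gen_subgroup.gen) simp
    then have va: "va lam \<noteq> 0" "\<nu> (va lam) = a lam" using v_val unfolding va_def by auto
    show "va lam * \<rho> lam (b j) $$ (s, t) \<in> val_ring \<nu>"
    proof (cases "\<rho> lam (b j) $$ (s, t) = 0")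
      case False
      then have le: "- a lam \<le> \<nu> (\<rho> lam (b j) $$ (s, t))" using vg unfolding valge_def by simp
      have "0 \<le> \<nu> (va lam) + \<nu> (\<rho> lam (b j) $$ (s, t))" using va add_left_mono[OF le, of "a lam"] by simp
      then show ?thesis using val_mult[OF val va(1) False] unfolding val_ring_def valge_def by simp
    qed simp
  qed
  have LClin: "\<And>lam s t i y. lam \<in> \<Lambda> \<Longrightarrow> s < d lam \<Longrightarrow> t < d lam \<Longrightarrow> i < n \<Longrightarrow>
      (\<And>j. j < n \<Longrightarrow> va lam * \<rho> lam (y j) $$ (s, t) \<in> val_ring \<nu>) \<Longrightarrow>
      LC (\<Sum>j<n. sc (A $$ (i, j)) (y j)) lam s t = (\<Sum>j<n. Ab $$ (i, j) * LC (y j) lam s t)"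
  proof -
    fix lam s t i y assume h: "lam \<in> \<Lambda>" "s < d lam" "t < d lam" "i < n"
      and yO: "\<And>j. j < n \<Longrightarrow> va lam * \<rho> lam (y j) $$ (s, t) \<in> val_ring \<nu>"
    have "LC (\<Sum>j<n. sc (A $$ (i, j)) (y j)) lam s t = \<pi> (\<Sum>j<n. A $$ (i, j) * (va lam * \<rho> lam (y j) $$ (s, t)))"
      unfolding LC_def rep_entry_sum[OF rep[OF h(1)] h(2,3)]
      by (simp add: sum_distrib_left mult_ac)
    also have "\<dots> = (\<Sum>j<n. \<pi> (A $$ (i, j) * (va lam * \<rho> lam (y j) $$ (s, t))))"
      using res_sum[OF val res, of "{..<n}" "\<lambda>j. A $$ (i, j) * (va lam * \<rho> lam (y j) $$ (s, t))"]
        vr_mult[OF val] AO yO h(4) by simp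
    also have "\<dots> = (\<Sum>j<n. Ab $$ (i, j) * LC (y j) lam s t)"
      using res_mult[OF res] AO yO h(4) Abe unfolding LC_def by simp
    finally show "LC (\<Sum>j<n. sc (A $$ (i, j)) (y j)) lam s t = (\<Sum>j<n. Ab $$ (i, j) * LC (y j) lam s t)" .
  qed
  have LCb': "\<And>lam s t i. lam \<in> \<Lambda> \<Longrightarrow> s < d lam \<Longrightarrow> t < d lam \<Longrightarrow> i < n \<Longrightarrow>
      LC (b' i) lam s t = (\<Sum>j<n. Ab $$ (i, j) * LC (b j) lam s t)"
    using LClin[of _ _ _ _ b] lcO base_change by simp
  have LCst: "\<And>lam s t i. lam \<in> \<Lambda> \<Longrightarrow> s < d lam \<Longrightarrow> t < d lam \<Longrightarrow> i < n \<Longrightarrow>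
      LC (st (b' i)) lam s t = (\<Sum>j<n. Ab $$ (i, j) * LC (st (b j)) lam s t)"
  proof -
    fix lam s t i assume h: "lam \<in> \<Lambda>" "s < d lam" "t < d lam" "i < n"
    have "\<And>j. j < n \<Longrightarrow> va lam * \<rho> lam (st (b j)) $$ (s, t) \<in> val_ring \<nu>"
      using lcO[OF h(1-3) sl] sb by metis
    then show "LC (st (b' i)) lam s t = (\<Sum>j<n. Ab $$ (i, j) * LC (st (b j)) lam s t)"
      using LClin[OF h, of "\<lambda>j. st (b j)"] st_b'[OF alg trace_form star B B' base_change h(4)] by simp
  qed
  define \<gamma> where "\<gamma> i j l = asym_gamma \<pi> \<Lambda> d \<rho> va f (b i) (b j) (b l)" for i j l
  have gamma': "\<And>i j l. i < n \<Longrightarrow> j < n \<Longrightarrow> l < n \<Longrightarrow>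
     asym_gamma \<pi> \<Lambda> d \<rho> va f (b' i) (b' j) (b' l)
       = (\<Sum>p<n. Ab $$ (i, p) * (\<Sum>q<n. Ab $$ (j, q) * (\<Sum>r<n. Ab $$ (l, r) * \<gamma> p q r)))"
  proof -
    fix i j l assume h: "i < n" "j < n" "l < n"
    have "asym_gamma \<pi> \<Lambda> d \<rho> va f (b' i) (b' j) (b' l)
       = G3 \<Lambda> d C (\<lambda>lam s t. \<Sum>p<n. Ab $$ (i, p) * LC (b p) lam s t)
            (\<lambda>lam s t. \<Sum>p<n. Ab $$ (j, p) * LC (b p) lam s t)
            (\<lambda>lam s t. \<Sum>p<n. Ab $$ (l, p) * LC (b p) lam s t)"
      unfolding gamma_G by (rule G3_cong) (use LCb' h in auto)
    also have "\<dots> = (\<Sum>p<n. Ab $$ (i, p) * (\<Sum>q<n. Ab $$ (j, q) * (\<Sum>r<n. Ab $$ (l, r) *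
        G3 \<Lambda> d C (LC (b p)) (LC (b q)) (LC (b r)))))"
      by (simp only: G3_lin1 G3_lin2 G3_lin3)
    also have "\<dots> = (\<Sum>p<n. Ab $$ (i, p) * (\<Sum>q<n. Ab $$ (j, q) * (\<Sum>r<n. Ab $$ (l, r) * \<gamma> p q r)))"
      unfolding \<gamma>_def gamma_G ..
    finally show "asym_gamma \<pi> \<Lambda> d \<rho> va f (b' i) (b' j) (b' l)
       = (\<Sum>p<n. Ab $$ (i, p) * (\<Sum>q<n. Ab $$ (j, q) * (\<Sum>r<n. Ab $$ (l, r) * \<gamma> p q r)))" .
  qed
  have nst': "\<And>i. i < n \<Longrightarrow> asym_n \<pi> \<Lambda> d \<rho> va f (st (b' i))
      = (\<Sum>m<n. Ab $$ (i, m) * asym_n \<pi> \<Lambda> d \<rho> va f (st (b m)))"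
  proof -
    fix i assume h: "i < n"
    have "asym_n \<pi> \<Lambda> d \<rho> va f (st (b' i))
        = N1 \<Lambda> d C (\<lambda>lam s t. \<Sum>m<n. Ab $$ (i, m) * LC (st (b m)) lam s t)"
      unfolding n_N by (rule N1_cong) (use LCst h in auto)
    also have "\<dots> = (\<Sum>m<n. Ab $$ (i, m) * asym_n \<pi> \<Lambda> d \<rho> va f (st (b m)))"
      by (simp only: N1_lin n_N)
    finally show "asym_n \<pi> \<Lambda> d \<rho> va f (st (b' i))
      = (\<Sum>m<n. Ab $$ (i, m) * asym_n \<pi> \<Lambda> d \<rho> va f (st (b m)))" .
  qed
  have al: "\<And>u. \<alpha> u = Ab *\<^sub>v u" unfolding \<alpha>_def Ab_def by simp
  have alk: "\<And>u k. u \<in> carrier_vec n \<Longrightarrow> k < n \<Longrightarrow> \<alpha> u $ k = (\<Sum>i<n. Ab $$ (k, i) * u $ i)"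
    unfolding al using mv[OF Ab] by blast
  have alc: "\<And>u. u \<in> carrier_vec n \<Longrightarrow> \<alpha> u \<in> carrier_vec n" unfolding al using Ab by simp
  have inv1: "\<And>u. u \<in> carrier_vec n \<Longrightarrow> Ab\<^sup>T *\<^sub>v \<alpha> u = u"
    unfolding al using Ab AbTAb assoc_mult_mat_vec[of "Ab\<^sup>T" n n Ab n] by (metis carrier_matI index_transpose_mat(2,3) carrier_matD one_mult_mat_vec)
  have inv2: "\<And>u. u \<in> carrier_vec n \<Longrightarrow> \<alpha> (Ab\<^sup>T *\<^sub>v u) = u"
    unfolding al using Ab AbAbT assoc_mult_mat_vec[of Ab n n "Ab\<^sup>T" n] by (metis carrier_matI index_transpose_mat(2,3) carrier_matD one_mult_mat_vec)
  have bij: "bij_betw \<alpha> (carrier_vec n) (carrier_vec n)"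
  proof (rule bij_betwI[where g = "\<lambda>u. Ab\<^sup>T *\<^sub>v u"])
    show "\<alpha> \<in> carrier_vec n \<rightarrow> carrier_vec n" using alc by blast
    show "(\<lambda>u. Ab\<^sup>T *\<^sub>v u) \<in> carrier_vec n \<rightarrow> carrier_vec n" using Ab by auto
  qed (use inv1 inv2 in auto)
  have starp: "\<forall>u\<in>carrier_vec n. \<alpha> (asym_star st b n u) = asym_star st b' n (\<alpha> u)"
  proof
    fix u :: "'f vec" assume u: "u \<in> carrier_vec n"
    have sc1: "asym_star st b n u \<in> carrier_vec n" unfolding asym_star_def by simp
    show "\<alpha> (asym_star st b n u) = asym_star st b' n (\<alpha> u)"
    proof (rule eq_vecI)
      show "dim_vec (\<alpha> (asym_star st b n u)) = dim_vec (asym_star st b' n (\<alpha> u))"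
        using alc[OF sc1] unfolding asym_star_def by simp
      fix k assume "k < dim_vec (asym_star st b' n (\<alpha> u))"
      then have k: "k < n" unfolding asym_star_def by simp
      have e1: "\<And>p. p < n \<Longrightarrow> asym_star st b n u $ p = u $ (\<sigma> p)"
        unfolding asym_star_def \<sigma>_def[symmetric] using sum_sigma[OF sl ss] by simp
      have "\<alpha> (asym_star st b n u) $ k = (\<Sum>p<n. Ab $$ (k, p) * u $ (\<sigma> p))"
        using alk[OF sc1 k] e1 by simp
      also have "\<dots> = (\<Sum>p<n. Ab $$ (k, \<sigma> (\<sigma> p)) * u $ (\<sigma> p))"
        using ss by simp
      also have "\<dots> = (\<Sum>c<n. Ab $$ (k, \<sigma> c) * u $ c)"
        by (rule sum_reidx[OF sl ss, of "\<lambda>c. Ab $$ (k, \<sigma> c) * u $ c"])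
      also have "\<dots> = (\<Sum>c<n. Ab $$ (\<sigma>' k, c) * u $ c)"
        using Absig k by simp
      also have "\<dots> = \<alpha> u $ (\<sigma>' k)" using alk[OF u sl'[OF k]] by simp
      also have "\<dots> = asym_star st b' n (\<alpha> u) $ k"
        unfolding asym_star_def \<sigma>'_def[symmetric] using sum_sigma[OF sl' ss' k, of "\<lambda>i. \<alpha> u $ i"] k by simp
      finally show "\<alpha> (asym_star st b n u) $ k = asym_star st b' n (\<alpha> u) $ k" .
    qed
  qed
  have trp: "\<forall>u\<in>carrier_vec n. asym_trace \<pi> \<Lambda> d \<rho> va f st b' n (\<alpha> u) = asym_trace \<pi> \<Lambda> d \<rho> va f st b n u"
  proof
    fix u :: "'f vec" assume u: "u \<in> carrier_vec n"
    define g where "g m = asym_n \<pi> \<Lambda> d \<rho> va f (st (b m))" for m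
    have "asym_trace \<pi> \<Lambda> d \<rho> va f st b' n (\<alpha> u)
        = (\<Sum>i<n. (\<Sum>x<n. Ab $$ (i, x) * u $ x) * (\<Sum>m<n. Ab $$ (i, m) * g m))"
      unfolding asym_trace_def g_def using alk[OF u] nst' by simp
    also have "\<dots> = (\<Sum>x<n. \<Sum>m<n. u $ x * g m * (\<Sum>i<n. Ab $$ (i, x) * Ab $$ (i, m)))"
      by (rule sw_tr)
    also have "\<dots> = (\<Sum>x<n. \<Sum>m<n. if x = m then u $ x * g m else 0)"
      using colO by (intro sum.cong refl) simp
    also have "\<dots> = (\<Sum>x<n. u $ x * g x)" by simp
    also have "\<dots> = asym_trace \<pi> \<Lambda> d \<rho> va f st b n u" unfolding asym_trace_def g_def ..
    finally show "asym_trace \<pi> \<Lambda> d \<rho> va f st b' n (\<alpha> u) = asym_trace \<pi> \<Lambda> d \<rho> va f st b n u" .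
  qed
  have multp: "\<forall>u\<in>carrier_vec n. \<forall>w\<in>carrier_vec n.
          \<alpha> (asym_mult \<pi> \<Lambda> d \<rho> va f st b n u w) = asym_mult \<pi> \<Lambda> d \<rho> va f st b' n (\<alpha> u) (\<alpha> w)"
  proof (intro ballI)
    fix u w :: "'f vec" assume u: "u \<in> carrier_vec n" and w: "w \<in> carrier_vec n"
    define M where "M = asym_mult \<pi> \<Lambda> d \<rho> va f st b n u w"
    have Mc: "M \<in> carrier_vec n" unfolding M_def asym_mult_def by simp
    define T where "T p q k = (\<Sum>r<n. Ab $$ (\<sigma>' k, r) * \<gamma> p q r)" for p q k
    show "\<alpha> (asym_mult \<pi> \<Lambda> d \<rho> va f st b n u w) = asym_mult \<pi> \<Lambda> d \<rho> va f st b' n (\<alpha> u) (\<alpha> w)"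
      unfolding M_def[symmetric]
    proof (rule eq_vecI)
      show "dim_vec (\<alpha> M) = dim_vec (asym_mult \<pi> \<Lambda> d \<rho> va f st b' n (\<alpha> u) (\<alpha> w))"
        using alc[OF Mc] unfolding asym_mult_def by simp
      fix k assume "k < dim_vec (asym_mult \<pi> \<Lambda> d \<rho> va f st b' n (\<alpha> u) (\<alpha> w))"
      then have k: "k < n" unfolding asym_mult_def by simp
      define \<Phi> where "\<Phi> c = (\<Sum>i<n. \<Sum>j<n. u $ i * w $ j * \<gamma> i j c)" for c
      have e1: "\<And>p. p < n \<Longrightarrow> M $ p = \<Phi> (\<sigma> p)"
      proof -
        fix p assume p: "p < n"
        have "M $ p = (\<Sum>i<n. \<Sum>j<n. \<Sum>l<n. if \<sigma> l = p then u $ i * w $ j * \<gamma> i j l else 0)"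
          unfolding M_def asym_mult_def \<sigma>_def[symmetric] \<gamma>_def using p by simp
        also have "\<dots> = \<Phi> (\<sigma> p)" unfolding \<Phi>_def
          by (intro sum.cong refl sum_sigma[OF sl ss p])
        finally show "M $ p = \<Phi> (\<sigma> p)" .
      qed
      have "\<alpha> M $ k = (\<Sum>p<n. Ab $$ (k, p) * \<Phi> (\<sigma> p))"
        using alk[OF Mc k] e1 by simp
      also have "\<dots> = (\<Sum>p<n. Ab $$ (k, \<sigma> (\<sigma> p)) * \<Phi> (\<sigma> p))"
        using ss by simp
      also have "\<dots> = (\<Sum>c<n. Ab $$ (k, \<sigma> c) * \<Phi> c)"
        by (rule sum_reidx[OF sl ss, of "\<lambda>c. Ab $$ (k, \<sigma> c) * \<Phi> c"])
      also have "\<dots> = (\<Sum>c<n. Ab $$ (\<sigma>' k, c) * \<Phi> c)"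
        using Absig k by simp
      also have "\<dots> = (\<Sum>i<n. \<Sum>j<n. u $ i * w $ j * (\<Sum>c<n. Ab $$ (\<sigma>' k, c) * \<gamma> i j c))"
        unfolding \<Phi>_def by (rule sw_c)
      finally have L: "\<alpha> M $ k = (\<Sum>i<n. \<Sum>j<n. u $ i * w $ j * T i j k)" unfolding T_def .
      have "asym_mult \<pi> \<Lambda> d \<rho> va f st b' n (\<alpha> u) (\<alpha> w) $ k
         = (\<Sum>i<n. \<Sum>j<n. \<Sum>l<n. if \<sigma>' l = k then \<alpha> u $ i * \<alpha> w $ j *
              asym_gamma \<pi> \<Lambda> d \<rho> va f (b' i) (b' j) (b' l) else 0)"
        unfolding asym_mult_def \<sigma>'_def[symmetric] using k by simp
      also have "\<dots> = (\<Sum>i<n. \<Sum>j<n. \<alpha> u $ i * \<alpha> w $ j *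
              asym_gamma \<pi> \<Lambda> d \<rho> va f (b' i) (b' j) (b' (\<sigma>' k)))"
        by (intro sum.cong refl sum_sigma[OF sl' ss' k])
      also have "\<dots> = (\<Sum>i<n. \<Sum>j<n. (\<Sum>x<n. Ab $$ (i, x) * u $ x) * (\<Sum>x<n. Ab $$ (j, x) * w $ x) *
              (\<Sum>p<n. Ab $$ (i, p) * (\<Sum>q<n. Ab $$ (j, q) * T p q k)))"
        unfolding T_def using gamma' sl'[OF k] alk[OF u] alk[OF w] by simp
      also have "\<dots> = (\<Sum>p<n. \<Sum>q<n. (\<Sum>i<n. (\<Sum>x<n. Ab $$ (i, x) * u $ x) * Ab $$ (i, p)) *
              (\<Sum>j<n. (\<Sum>x<n. Ab $$ (j, x) * w $ x) * Ab $$ (j, q)) * T p q k)"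
        by (rule sw_mult)
      also have "\<dots> = (\<Sum>p<n. \<Sum>q<n. u $ p * w $ q * T p q k)"
      proof -
        have c: "\<And>v p. p < n \<Longrightarrow> (\<Sum>i<n. (\<Sum>x<n. Ab $$ (i, x) * v $ x) * Ab $$ (i, p)) = v $ p"
        proof -
          fix v :: "'f vec" and p assume p: "p < n"
          have "(\<Sum>i<n. (\<Sum>x<n. Ab $$ (i, x) * v $ x) * Ab $$ (i, p)) = (\<Sum>x<n. v $ x * (\<Sum>i<n. Ab $$ (i, x) * Ab $$ (i, p)))"
            by (rule sw_col)
          also have "\<dots> = (\<Sum>x<n. if x = p then v $ x else 0)" using colO p by (intro sum.cong refl) simp
          also have "\<dots> = v $ p" using p by simp
          finally show "(\<Sum>i<n. (\<Sum>x<n. Ab $$ (i, x) * v $ x) * Ab $$ (i, p)) = v $ p" .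
        qed
        show ?thesis using c by simp
      qed
      finally show "\<alpha> M $ k = asym_mult \<pi> \<Lambda> d \<rho> va f st b' n (\<alpha> u) (\<alpha> w) $ k" using L by simp
    qed
  qed
  show ?thesis using AO AAT bij multp trp starp by blast
qed


end
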